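(* For every symmetric sequence space $X$ and every $x\in X$, $$\|x\|_X\le\Big\|\sum_{k=0}^\infty x^*_{2^k}e_{k+1}\Big\|_{E_X}\le5\|x\|_X.$$
   Context: A Banach sequence lattice is a Banach space $E$ of real sequences such that $x\in E$, $|y_k|\le|x_k|$ imply $y\in E$, $\|y\|_E\le\|x\|_E$. $u^*$ is the nonincreasing rearrangement of $(|u_k|)$, $u^*_k=\inf_{\mathrm{card}A=k-1}\sup_{i\notin A}|u_i|$. A symmetric sequence space is a Banach sequence lattice $X\subset\ell^\infty$ such that $x\in X$, $y^*=x^*$ imply $y\in X$, $\|y\|_X=\|x\|_X$; standing assumption: $X$ is separable or has the Fatou property. $e_k$ is the $k$-th unit vector. $E_X$ is the Banach sequence lattice of all real sequences $a$ with $\|a\|_{E_X}:=\|\sum_{k=1}^\infty a_k\sum_{i=2^{k-1}}^{2^k-1}e_i\|_X<\infty$. *)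

theory Defs
  imports Complex_Main "HOL-Library.Extended_Real"
begin

text \<open>Real sequences are functions nat => real, indexed from 0:
  the paper's coordinate x_k (k >= 1) is x (k - 1).\<close>

definition banach_seq_lattice :: "(nat \<Rightarrow> real) set \<Rightarrow> ((nat \<Rightarrow> real) \<Rightarrow> real) \<Rightarrow> bool" where
  "banach_seq_lattice E N \<longleftrightarrow>
     (\<lambda>k. 0) \<in> E \<and>
     (\<forall>x\<in>E. \<forall>y\<in>E. (\<lambda>k. x k + y k) \<in> E) \<and>
     (\<forall>c. \<forall>x\<in>E. (\<lambda>k. c * x k) \<in> E) \<and>
     (\<forall>x\<in>E. 0 \<le> N x \<and> (N x = 0 \<longleftrightarrow> x = (\<lambda>k. 0))) \<and>
     (\<forall>x\<in>E. \<forall>y\<in>E. N (\<lambda>k. x k + y k) \<le> N x + N y) \<and>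
     (\<forall>c. \<forall>x\<in>E. N (\<lambda>k. c * x k) = \<bar>c\<bar> * N x) \<and>
     (\<forall>s. (\<forall>n. s n \<in> E) \<and> (\<forall>\<epsilon>>0. \<exists>M. \<forall>m\<ge>M. \<forall>n\<ge>M. N (\<lambda>k. s m k - s n k) < \<epsilon>)
          \<longrightarrow> (\<exists>l\<in>E. (\<lambda>n. N (\<lambda>k. s n k - l k)) \<longlonglongrightarrow> 0)) \<and>
     (\<forall>x\<in>E. \<forall>y. (\<forall>k. \<bar>y k\<bar> \<le> \<bar>x k\<bar>) \<longrightarrow> y \<in> E \<and> N y \<le> N x)"

text \<open>Taken in the extended reals so that it is meaningful for all sequences.\<close>

definition rearr :: "(nat \<Rightarrow> real) \<Rightarrow> nat \<Rightarrow> ereal" where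
  "rearr u k = (INF A \<in> {A. finite A \<and> card A = k - 1}. SUP i \<in> - A. ereal \<bar>u i\<bar>)"

definition bounded_seq :: "(nat \<Rightarrow> real) \<Rightarrow> bool" where
  "bounded_seq x \<longleftrightarrow> (\<exists>B. \<forall>k. \<bar>x k\<bar> \<le> B)"

definition separable_space :: "(nat \<Rightarrow> real) set \<Rightarrow> ((nat \<Rightarrow> real) \<Rightarrow> real) \<Rightarrow> bool" where
  "separable_space E N \<longleftrightarrow>
     (\<exists>D. countable D \<and> D \<subseteq> E \<and> (\<forall>x\<in>E. \<forall>\<epsilon>>0. \<exists>d\<in>D. N (\<lambda>k. x k - d k) < \<epsilon>))"

definition fatou_property :: "(nat \<Rightarrow> real) set \<Rightarrow> ((nat \<Rightarrow> real) \<Rightarrow> real) \<Rightarrow> bool" where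
  "fatou_property E N \<longleftrightarrow>
     (\<forall>s x. (\<forall>n. s n \<in> E) \<and> (\<forall>n k. 0 \<le> s n k \<and> s n k \<le> s (Suc n) k) \<and>
            (\<forall>k. (\<lambda>n. s n k) \<longlonglongrightarrow> x k) \<and> bdd_above (range (\<lambda>n. N (s n)))
        \<longrightarrow> x \<in> E \<and> N x = (SUP n. N (s n)))"

definition symmetric_seq_space :: "(nat \<Rightarrow> real) set \<Rightarrow> ((nat \<Rightarrow> real) \<Rightarrow> real) \<Rightarrow> bool" where
  "symmetric_seq_space X N \<longleftrightarrow>
     banach_seq_lattice X N \<and>
     (\<forall>x\<in>X. bounded_seq x) \<and>
     (\<forall>x\<in>X. \<forall>y. rearr y = rearr x \<longrightarrow> y \<in> X \<and> N y = N x) \<and>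
     (separable_space X N \<or> fatou_property X N)"

text \<open>The block sequence sum_{k>=1} a_k sum_{i=2^(k-1)}^{2^k-1} e_i, written 0-based:
  coordinate j (paper index j+1) equals a (m) with 2^m <= j+1 < 2^(m+1).\<close>

definition dyadic_block :: "(nat \<Rightarrow> real) \<Rightarrow> nat \<Rightarrow> real" where
  "dyadic_block a j = (\<Sum>m\<le>j. a m * (if 2 ^ m \<le> Suc j \<and> Suc j < 2 ^ Suc m then 1 else 0))"

definition E_space :: "(nat \<Rightarrow> real) set \<Rightarrow> (nat \<Rightarrow> real) set" where
  "E_space X = {a. dyadic_block a \<in> X}"

definition E_norm :: "((nat \<Rightarrow> real) \<Rightarrow> real) \<Rightarrow> (nat \<Rightarrow> real) \<Rightarrow> real" where
  "E_norm N a = N (dyadic_block a)"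

end

theory Submission
  imports Defs
begin

lemma rearr_place:
  fixes s :: "nat \<Rightarrow> real" and p :: "nat \<Rightarrow> nat" and u :: "nat \<Rightarrow> real" and k :: nat
  assumes inj: "inj p" and dec: "\<And>i j. i \<le> j \<Longrightarrow> s j \<le> s i"
    and pl: "\<And>j. \<bar>u (p j)\<bar> = s j" and z: "\<And>i. i \<notin> range p \<Longrightarrow> u i = 0"
    and nn: "\<And>j. 0 \<le> s j"
  shows "rearr u k = ereal (s (k - 1))"
proof -
  define n where "n = k - 1"
  have le: "ereal (s n) \<le> (SUP i\<in>-A. ereal \<bar>u i\<bar>)" if fA: "finite A" and cA: "card A = n" for A :: "nat set"
  proof -
    have c1: "card (p ` {..n}) = Suc n"
      using card_image[OF inj_on_subset[OF inj subset_UNIV]] by simp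
    have "\<not> p ` {..n} \<subseteq> A"
    proof
      assume "p ` {..n} \<subseteq> A"
      then have "card (p ` {..n}) \<le> card A" by (rule card_mono[OF fA])
      then show False using c1 cA by simp
    qed
    then obtain j where j: "j \<le> n" "p j \<notin> A" by blast
    have "s n \<le> s j" by (rule dec[OF j(1)])
    then have "ereal (s n) \<le> ereal \<bar>u (p j)\<bar>" by (simp add: pl)
    also have "\<dots> \<le> (SUP i\<in>-A. ereal \<bar>u i\<bar>)"
      by (rule SUP_upper[of "p j" "-A"]) (simp add: j)
    finally show ?thesis .
  qed
  have ge: "(SUP i\<in>-(p`{..<n}). ereal \<bar>u i\<bar>) \<le> ereal (s n)"
  proof (rule SUP_least)
    fix i assume i: "i \<in> - p ` {..<n}"
    show "ereal \<bar>u i\<bar> \<le> ereal (s n)"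
    proof (cases "i \<in> range p")
      case True
      then obtain j where ij: "i = p j" by blast
      have "\<not> j < n" using i ij by blast
      then have "n \<le> j" by simp
      then have "s j \<le> s n" by (rule dec)
      then show ?thesis using pl[of j] ij by simp
    next
      case False then show ?thesis using z[OF False] nn[of n] by simp
    qed
  qed
  have cA: "card (p`{..<n}) = n" 
    using card_image[OF inj_on_subset[OF inj subset_UNIV]] by simp
  have "rearr u k = (INF A \<in> {A. finite A \<and> card A = n}. SUP i \<in> - A. ereal \<bar>u i\<bar>)"
    by (simp add: rearr_def n_def)
  also have "\<dots> = ereal (s n)"
  proof (rule antisym)
    have "(INF A \<in> {A. finite A \<and> card A = n}. SUP i \<in> - A. ereal \<bar>u i\<bar>)
       \<le> (SUP i\<in>-(p`{..<n}). ereal \<bar>u i\<bar>)"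
      by (rule INF_lower[of "p`{..<n}"]) (simp add: cA)
    then show "(INF A \<in> {A. finite A \<and> card A = n}. SUP i \<in> - A. ereal \<bar>u i\<bar>) \<le> ereal (s n)"
      using ge by (rule order_trans)
    show "ereal (s n) \<le> (INF A \<in> {A. finite A \<and> card A = n}. SUP i \<in> - A. ereal \<bar>u i\<bar>)"
      by (rule INF_greatest) (use le in blast)
  qed
  finally show ?thesis by (simp add: n_def)
qed
lemma rearr_0: "rearr (x::nat\<Rightarrow>real) k = rearr x (Suc (k - 1))"
  by (cases k) (simp_all add: rearr_def)

lemma rearr_bounds:
  fixes x :: "nat \<Rightarrow> real" and B :: real and k :: nat
  assumes "\<And>k. \<bar>x k\<bar> \<le> B"
  shows "0 \<le> rearr x k \<and> rearr x k \<le> ereal B"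
proof
  show "0 \<le> rearr x k"
    unfolding rearr_def
  proof (rule INF_greatest)
    fix A :: "nat set" assume "A \<in> {A. finite A \<and> card A = k - 1}"
    then have "finite A" by simp
    then obtain i where i: "i \<notin> A" using ex_new_if_finite[OF infinite_UNIV_nat] by blast
    have "(0::ereal) \<le> ereal \<bar>x i\<bar>" by simp
    also have "\<dots> \<le> (SUP i\<in>-A. ereal \<bar>x i\<bar>)"
      by (rule SUP_upper[of i "-A"]) (simp add: i)
    finally show "0 \<le> (SUP i\<in>-A. ereal \<bar>x i\<bar>)" .
  qed
  have "rearr x k \<le> (SUP i\<in>-{..<k-1}. ereal \<bar>x i\<bar>)"
    unfolding rearr_def by (rule INF_lower[of "{..<k-1}"]) auto
  also have "\<dots> \<le> ereal B"
    by (rule SUP_least) (simp add: assms)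
  finally show "rearr x k \<le> ereal B" .
qed

lemma rearr_mono:
  fixes x :: "nat \<Rightarrow> real" and k :: nat
  assumes "1 \<le> k"
  shows "rearr x (Suc k) \<le> rearr x k"
  unfolding rearr_def
proof (rule INF_greatest)
  fix A :: "nat set" assume "A \<in> {A. finite A \<and> card A = k - 1}"
  then have A: "finite A" "card A = k - 1" by auto
  then obtain a where a: "a \<notin> A" using ex_new_if_finite[OF infinite_UNIV_nat] by blast
  have "card (insert a A) = Suc k - 1" using A a assms by simp
  then have "(INF A \<in> {A. finite A \<and> card A = Suc k - 1}. SUP i \<in> - A. ereal \<bar>x i\<bar>)
       \<le> (SUP i \<in> - insert a A. ereal \<bar>x i\<bar>)"
    using A by (intro INF_lower[of "insert a A"]) auto
  also have "\<dots> \<le> (SUP i \<in> - A. ereal \<bar>x i\<bar>)"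
    by (rule SUP_subset_mono) auto
  finally show "(INF A \<in> {A. finite A \<and> card A = Suc k - 1}. SUP i \<in> - A. ereal \<bar>x i\<bar>)
       \<le> (SUP i \<in> - A. ereal \<bar>x i\<bar>)" .
qed


lemma dyadic_ex: "\<exists>m. 2 ^ m \<le> Suc j \<and> Suc j < (2::nat) ^ Suc m"
  using ex_power_ivl1[of 2 "Suc j"] by simp

lemma dyadic_uniq:
  assumes "2 ^ m \<le> Suc j" "Suc j < (2::nat) ^ Suc m" "2 ^ m' \<le> Suc j" "Suc j < (2::nat) ^ Suc m'"
  shows "m' = m"
proof (rule ccontr)
  assume "m' \<noteq> m"
  then have "Suc m \<le> m' \<or> Suc m' \<le> m" by auto
  then show False
  proof
    assume "Suc m \<le> m'"
    then have "(2::nat) ^ Suc m \<le> 2 ^ m'" by (rule power_increasing) simp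
    then show False using assms by simp
  next
    assume "Suc m' \<le> m"
    then have "(2::nat) ^ Suc m' \<le> 2 ^ m" by (rule power_increasing) simp
    then show False using assms by simp
  qed
qed

lemma dyadic_val:
  assumes "2 ^ m \<le> Suc j" "Suc j < (2::nat) ^ Suc m"
  shows "dyadic_block a j = a m"
proof -
  have mj: "m \<le> j"
  proof -
    have "m < 2 ^ m" by (rule less_exp)
    then have "m < Suc j" using assms(1) by (rule less_le_trans)
    then show ?thesis by simp
  qed
  have "dyadic_block a j = (\<Sum>m'\<le>j. if m' = m then a m else 0)"
    unfolding dyadic_block_def
  proof (rule sum.cong)
    fix m' assume "m' \<in> {..j}"
    show "a m' * (if 2 ^ m' \<le> Suc j \<and> Suc j < 2 ^ Suc m' then 1 else 0) = (if m' = m then a m else 0)"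
    proof (cases "m' = m")
      case True then show ?thesis using assms by simp
    next
      case False
      then have "\<not> (2 ^ m' \<le> Suc j \<and> Suc j < 2 ^ Suc m')"
        using dyadic_uniq[OF assms, of m'] by blast
      then show ?thesis using False by (simp only: if_False if_not_P mult_zero_right)
    qed
  qed simp
  also have "\<dots> = a m" using mj by (simp add: sum.delta)
  finally show ?thesis .
qed
theorem mainTheorem7:
  fixes X :: "(nat \<Rightarrow> real) set" and N :: "(nat \<Rightarrow> real) \<Rightarrow> real" and x :: "nat \<Rightarrow> real"
  assumes "symmetric_seq_space X N" and "x \<in> X"
  defines "b \<equiv> (\<lambda>k. real_of_ereal (rearr x (2 ^ k)))"
  shows "b \<in> E_space X \<and> N x \<le> E_norm N b \<and> E_norm N b \<le> 5 * N x"
proof -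
  have S1: "banach_seq_lattice X N" and S2: "\<forall>x\<in>X. bounded_seq x"
    and S3: "\<forall>x\<in>X. \<forall>y. rearr y = rearr x \<longrightarrow> y \<in> X \<and> N y = N x"
    using assms(1) unfolding symmetric_seq_space_def by blast+
  note bl = S1[unfolded banach_seq_lattice_def]
  have addX: "\<And>y z. y \<in> X \<Longrightarrow> z \<in> X \<Longrightarrow> (\<lambda>k. y k + z k) \<in> X"
    using bl[THEN conjunct2, THEN conjunct1] by blast
  have nnN: "\<And>y. y \<in> X \<Longrightarrow> 0 \<le> N y"
    using bl[THEN conjunct2, THEN conjunct2, THEN conjunct2, THEN conjunct1] by blast
  have tri: "\<And>y z. y \<in> X \<Longrightarrow> z \<in> X \<Longrightarrow> N (\<lambda>k. y k + z k) \<le> N y + N z"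
    using bl[THEN conjunct2, THEN conjunct2, THEN conjunct2, THEN conjunct2, THEN conjunct1] by blast
  have sol: "\<And>y z. y \<in> X \<Longrightarrow> (\<And>k. \<bar>z k\<bar> \<le> \<bar>y k\<bar>) \<Longrightarrow> z \<in> X \<and> N z \<le> N y"
    using bl[THEN conjunct2, THEN conjunct2, THEN conjunct2, THEN conjunct2, THEN conjunct2,
      THEN conjunct2, THEN conjunct2] by blast
  have sym: "\<And>y. rearr y = rearr x \<Longrightarrow> y \<in> X \<and> N y = N x"
    using S3 assms(2) by blast
  have "bounded_seq x" using S2 assms(2) by blast
  then obtain B where B: "\<And>k. \<bar>x k\<bar> \<le> B" unfolding bounded_seq_def by blast
  define s where "s j = real_of_ereal (rearr x (Suc j))" for j
  have fin: "rearr x k = ereal (real_of_ereal (rearr x k)) \<and> 0 \<le> real_of_ereal (rearr x k)" for k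
  proof -
    have h: "0 \<le> rearr x k" "rearr x k \<le> ereal B" using rearr_bounds[of x B k, OF B] by auto
    then have "\<bar>rearr x k\<bar> \<noteq> \<infinity>" by auto
    then have "ereal (real_of_ereal (rearr x k)) = rearr x k" by (rule ereal_real')
    then show ?thesis using h by (simp add: real_of_ereal_pos)
  qed
  have hx: "rearr x k = ereal (s (k - 1))" for k
    using rearr_0[of x k] fin[of "Suc (k - 1)"] by (simp add: s_def)
  have snn: "0 \<le> s j" for j using fin[of "Suc j"] by (simp add: s_def)
  have sstep: "s (Suc j) \<le> s j" for j
  proof -
    have "rearr x (Suc (Suc j)) \<le> rearr x (Suc j)" by (rule rearr_mono) simp
    then show ?thesis using hx[of "Suc (Suc j)"] hx[of "Suc j"] by simp
  qed
  have dec: "s j \<le> s i" if "i \<le> j" for i j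
    using lift_Suc_antimono_le[of s, OF sstep that] .
  have "rearr s = rearr x"
  proof
    fix k show "rearr s k = rearr x k"
    proof -
      have "rearr s k = ereal (s (k - 1))"
      proof (rule rearr_place[of id s s k])
        show "inj (id::nat \<Rightarrow> nat)" by (rule inj_on_id)
        show "\<And>i j. i \<le> j \<Longrightarrow> s j \<le> s i" by (rule dec)
        show "\<And>j. \<bar>s (id j)\<bar> = s j" using snn by simp
        show "\<And>i. i \<notin> range id \<Longrightarrow> s i = 0" by simp
        show "\<And>j. 0 \<le> s j" by (rule snn)
      qed
      then show ?thesis using hx[of k] by simp
    qed
  qed
  then have "s \<in> X \<and> N s = N x" by (rule sym)
  then have sX: "s \<in> X" and Ns: "N s = N x" by simp_all
  define ue where "ue j = (if even j then s (j div 2) else 0)" for j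
  define uo where "uo j = (if odd j then s (j div 2) else 0)" for j
  have "rearr ue = rearr x"
  proof
    fix k
    have "rearr ue k = ereal (s (k - 1))"
    proof (rule rearr_place[of "\<lambda>j. 2 * j"])
      show "inj (\<lambda>j::nat. 2 * j)" by (simp add: inj_on_def)
      show "\<And>i. i \<notin> range (\<lambda>j::nat. 2 * j) \<Longrightarrow> ue i = 0"
        unfolding ue_def by (auto elim!: evenE)
      show "\<And>j. \<bar>ue (2 * j)\<bar> = s j" using snn by (simp add: ue_def)
      show "\<And>i j. i \<le> j \<Longrightarrow> s j \<le> s i" by (rule dec)
      show "\<And>j. 0 \<le> s j" by (rule snn)
    qed
    then show "rearr ue k = rearr x k" using hx by simp
  qed
  then have "ue \<in> X \<and> N ue = N x" by (rule sym)
  then have ueX: "ue \<in> X" and Nue: "N ue = N x" by simp_all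
  have "rearr uo = rearr x"
  proof
    fix k
    have "rearr uo k = ereal (s (k - 1))"
    proof (rule rearr_place[of "\<lambda>j. 2 * j + 1"])
      show "inj (\<lambda>j::nat. 2 * j + 1)" by (simp add: inj_on_def)
      show "\<And>i. i \<notin> range (\<lambda>j::nat. 2 * j + 1) \<Longrightarrow> uo i = 0"
        unfolding uo_def by (auto elim!: oddE)
      show "\<And>j. \<bar>uo (2 * j + 1)\<bar> = s j" using snn by (simp add: uo_def)
      show "\<And>i j. i \<le> j \<Longrightarrow> s j \<le> s i" by (rule dec)
      show "\<And>j. 0 \<le> s j" by (rule snn)
    qed
    then show "rearr uo k = rearr x k" using hx by simp
  qed
  then have "uo \<in> X \<and> N uo = N x" by (rule sym)
  then have uoX: "uo \<in> X" and Nuo: "N uo = N x" by simp_all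
  define v where "v = (\<lambda>k. ue k + uo k)"
  have vX: "v \<in> X" unfolding v_def by (rule addX[OF ueX uoX])
  have Nv: "N v \<le> 2 * N x" unfolding v_def using tri[OF ueX uoX] Nue Nuo by simp
  have vval: "v j = s (j div 2)" for j unfolding v_def ue_def uo_def by simp
  define d where "d = dyadic_block b"
  have dbounds: "s j \<le> d j \<and> d j \<le> s (j div 2)" for j
  proof -
    obtain m where m: "2 ^ m \<le> Suc j" "Suc j < (2::nat) ^ Suc m" using dyadic_ex by blast
    have "d j = b m" unfolding d_def by (rule dyadic_val[OF m])
    also have "\<dots> = s (2 ^ m - 1)" unfolding b_def using hx[of "2 ^ m"] by simp
    finally have dj: "d j = s (2 ^ m - 1)" .
    define P :: nat where "P = 2 ^ m"
    have P1: "1 \<le> P" unfolding P_def by simp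
    have m1: "P \<le> Suc j" "Suc j < 2 * P" using m unfolding P_def by auto
    have "P - 1 \<le> j" using m1 by arith
    moreover have "j div 2 \<le> P - 1" using m1 P1 by arith
    ultimately have "s j \<le> s (P - 1)" "s (P - 1) \<le> s (j div 2)" using dec by blast+
    then show ?thesis using dj unfolding P_def by simp
  qed
  have dv: "\<bar>d k\<bar> \<le> \<bar>v k\<bar>" for k
  proof -
    have "0 \<le> d k" using dbounds[of k] snn[of k] by linarith
    then show ?thesis using dbounds[of k] vval[of k] snn[of "k div 2"] by linarith
  qed
  have sd: "\<bar>s k\<bar> \<le> \<bar>d k\<bar>" for k
    using dbounds[of k] snn[of k] by linarith
  have dX: "d \<in> X" and Nd: "N d \<le> N v"
    using sol[OF vX dv] by blast+
  have "N s \<le> N d"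
    using sol[OF dX sd] by blast
  then have "N x \<le> N d" using Ns by simp
  moreover have "0 \<le> N x" using nnN[OF assms(2)] .
  ultimately show ?thesis
    using dX Nd Nv unfolding E_space_def E_norm_def d_def by auto
qed

end
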